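(* Let $\mathcal{X}\subseteq\mathbb{R}^d$ be nonempty, closed and convex, and let $f=\frac1n\sum_{i=1}^nf_i$, where each $f_i:\mathbb{R}^d\to\mathbb{R}$ is convex, differentiable and $L_i$-smooth on an open convex set containing $\mathcal{X}$. Let $x_\star\in\operatorname{arg\,min}_{x\in\mathcal{X}}f(x)$, assume each $f_i$ has a constrained minimizer $x_{\star,i}\in\operatorname{arg\,min}_{x\in\mathcal{X}}f_i(x)$, and let $D:=\max_i\|x_{\star,i}-x_\star\|$, $L_{\max}:=\max_iL_i$, $\bar L_2^2:=\frac1n\sum_{i=1}^nL_i^2$. Let $x_0\in\mathcal{X}$, sample $i_k$ uniformly from $\{1,\dots,n\}$ independently of the past, and set $x_{k+1}\in\operatorname{arg\,min}_{z\in\mathcal{X}\cap\mathcal{B}(x_k,t_k)}\langle\nabla f_{i_k}(x_k),z\rangle$ with $t_k:=\|\nabla f_{i_k}(x_k)-\nabla f_{i_k}(x_{\star,i_k})\|/L_{i_k}$ if $\nabla f_{i_k}(x_k)\ne\nabla f_{i_k}(x_{\star,i_k})$ and $t_k:=0$ otherwise. Then for every $K\ge1$, $$\min_{0\le k\le K-1}\mathbb{E}\|\nabla f(x_k)-\nabla f(x_\star)\|\le\sqrt{\frac{4L_{\max}^2\|x_0-x_\star\|^2}{K}+(8L_{\max}^2+2\bar L_2^2)D^2}.$$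
   Context: $\|\cdot\|$ is the Euclidean norm, $\mathcal{B}(x,t):=\{y:\|y-x\|\le t\}$; $L_i$-smooth: $\nabla f_i$ is $L_i$-Lipschitz. *)

theory Defs
  imports "HOL-Analysis.Analysis"
begin

definition idx_seqs :: "nat \<Rightarrow> nat \<Rightarrow> nat list set" where
  "idx_seqs n k = {is. length is = k \<and> set is \<subseteq> {..<n}}"

text \<open>Expectation of a function of the history when i_0, ..., i_{k-1} are
  i.i.d. uniform on {0..<n}: the uniform average over all histories.\<close>
definition unif_expect :: "nat \<Rightarrow> nat \<Rightarrow> (nat list \<Rightarrow> real) \<Rightarrow> real" where
  "unif_expect n k Y = (\<Sum>is\<in>idx_seqs n k. Y is) / real n ^ k"

end

theory Submission
  imports Defs
begin


lemma deriv_line: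
  fixes f :: "'a::real_inner \<Rightarrow> real"
  assumes "(f has_derivative (\<lambda>h. G (z + s *\<^sub>R d) \<bullet> h)) (at (z + s *\<^sub>R d))"
  shows "((\<lambda>s. f (z + s *\<^sub>R d)) has_real_derivative (G (z + s *\<^sub>R d) \<bullet> d)) (at s)"
proof -
  have l: "((\<lambda>s. z + s *\<^sub>R d) has_derivative (\<lambda>h. h *\<^sub>R d)) (at s)"
    by (auto intro!: derivative_eq_intros)
  have "((f \<circ> (\<lambda>s. z + s *\<^sub>R d)) has_derivative ((\<lambda>h. G (z + s *\<^sub>R d) \<bullet> h) \<circ> (\<lambda>h. h *\<^sub>R d))) (at s)"
    by (rule diff_chain_at[OF l assms])
  then have "((\<lambda>s. f (z + s *\<^sub>R d)) has_derivative (\<lambda>h. G (z + s *\<^sub>R d) \<bullet> (h *\<^sub>R d))) (at s)"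
    by (simp add: o_def)
  then show ?thesis
    by (rule has_derivative_imp_has_field_derivative) simp
qed

lemma descent:
  fixes f :: "'a::real_inner \<Rightarrow> real"
  assumes U: "convex U" and z: "z \<in> U" and v: "v \<in> U"
    and grad: "\<And>y. y \<in> U \<Longrightarrow> (f has_derivative (\<lambda>h. G y \<bullet> h)) (at y)"
    and lip: "lipschitz_on L U G"
  shows "f v \<le> f z + G z \<bullet> (v - z) + L / 2 * (norm (v - z))^2"
proof -
  define d where "d = v - z"
  define \<phi> where "\<phi> s = f (z + s *\<^sub>R d) - s * (G z \<bullet> d) - L / 2 * s^2 * (norm d)^2" for s
  have "\<phi> 1 \<le> \<phi> 0"
  proof (rule DERIV_nonpos_imp_nonincreasing[of 0 1 \<phi>])
    fix s :: real assume s: "0 \<le> s" "s \<le> 1"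
    have zs: "z + s *\<^sub>R d \<in> U"
    proof -
      have "z + s *\<^sub>R d = (1 - s) *\<^sub>R z + s *\<^sub>R v" by (simp add: d_def algebra_simps)
      then show ?thesis using convexD_alt[OF U z v, of s] s by simp
    qed
    have D: "(\<phi> has_real_derivative (G (z + s *\<^sub>R d) \<bullet> d - G z \<bullet> d - L * s * (norm d)^2)) (at s)"
      unfolding \<phi>_def
      by (rule derivative_eq_intros deriv_line grad[OF zs] | simp)+
    have "(G (z + s *\<^sub>R d) - G z) \<bullet> d \<le> norm (G (z + s *\<^sub>R d) - G z) * norm d"
      by (rule norm_cauchy_schwarz)
    also have "\<dots> \<le> (L * norm (z + s *\<^sub>R d - z)) * norm d"
      by (intro mult_right_mono lipschitz_on_normD[OF lip zs z]) auto
    also have "\<dots> = L * s * (norm d)^2" using s by (simp add: power2_eq_square)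
    finally have "G (z + s *\<^sub>R d) \<bullet> d - G z \<bullet> d - L * s * (norm d)^2 \<le> 0"
      by (simp add: inner_diff_left)
    with D show "\<exists>y. (\<phi> has_real_derivative y) (at s) \<and> y \<le> 0" by blast
  qed simp
  then show ?thesis by (simp add: \<phi>_def d_def)
qed

lemma tangent:
  fixes f :: "'a::real_inner \<Rightarrow> real"
  assumes Uo: "open U" and U: "convex U" and fc: "convex_on U f" and w: "w \<in> U" and v: "v \<in> U"
    and grad: "\<And>y. y \<in> U \<Longrightarrow> (f has_derivative (\<lambda>h. G y \<bullet> h)) (at y)"
  shows "f w + G w \<bullet> (v - w) \<le> f v"
proof -
  define d where "d = v - w"
  define A where "A = {s::real. w + s *\<^sub>R d \<in> U}"
  define h where "h s = f (w + s *\<^sub>R d)" for s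
  have Ao: "open A"
  proof -
    have "open ((\<lambda>s::real. w + s *\<^sub>R d) -` U)"
      by (rule open_vimage[OF Uo]) (auto intro!: continuous_intros)
    then show ?thesis by (simp add: A_def vimage_def)
  qed
  have Ac: "convex A"
  proof (rule convexI)
    fix x y :: real and u v :: real
    assume x: "x \<in> A" and y: "y \<in> A" and u: "0 \<le> u" and v: "0 \<le> v" and uv: "u + v = 1"
    from x y have x: "w + x *\<^sub>R d \<in> U" and y: "w + y *\<^sub>R d \<in> U" by (auto simp: A_def)
    have e: "w + (u * x + v * y) *\<^sub>R d = u *\<^sub>R (w + x *\<^sub>R d) + v *\<^sub>R (w + y *\<^sub>R d)"
      using uv by (simp add: algebra_simps flip: scaleR_add_left)
    show "u *\<^sub>R x + v *\<^sub>R y \<in> A"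
      using convexD[OF U x y u v uv] by (simp add: A_def e)
  qed
  have hc: "convex_on A h"
  proof (rule convex_onI)
    fix t x y :: real assume t: "0 < t" "t < 1" and x: "x \<in> A" and y: "y \<in> A"
    have e: "w + ((1 - t) * x + t * y) *\<^sub>R d = (1 - t) *\<^sub>R (w + x *\<^sub>R d) + t *\<^sub>R (w + y *\<^sub>R d)"
      by (simp add: algebra_simps)
    show "h ((1 - t) *\<^sub>R x + t *\<^sub>R y) \<le> (1 - t) * h x + t * h y"
      using convex_onD[OF fc, of t "w + x *\<^sub>R d" "w + y *\<^sub>R d"] x y t
      unfolding h_def A_def by (simp add: e)
  qed (rule Ac)
  have A0: "0 \<in> A" and A1: "1 \<in> A" using w v by (auto simp: A_def d_def)
  have D: "(h has_real_derivative (G w \<bullet> d)) (at 0 within A)"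
    unfolding h_def
    using deriv_line[of f G w 0 d] grad[OF w] by (auto intro: has_field_derivative_at_within)
  have "h 1 - h 0 \<ge> (G w \<bullet> d) * (1 - 0)"
    by (rule convex_on_imp_above_tangent[OF hc convex_connected[OF Ac] _ A1 D])
       (simp add: interior_open[OF Ao] A0)
  then show ?thesis by (simp add: h_def d_def)
qed

lemma half_coco:
  fixes f :: "'a::real_inner \<Rightarrow> real"
  assumes Uo: "open U" and U: "convex U" and fc: "convex_on U f" and z: "z \<in> U" and w: "w \<in> U"
    and grad: "\<And>y. y \<in> U \<Longrightarrow> (f has_derivative (\<lambda>h. G y \<bullet> h)) (at y)"
    and lip: "lipschitz_on L U G" and L: "L > 0"
    and ball: "cball z (norm (z - w)) \<subseteq> U"
  shows "f w + G w \<bullet> (z - w) + (norm (G z - G w))^2 / (2 * L) \<le> f z"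
proof -
  define \<Delta> where "\<Delta> = G z - G w"
  define v where "v = z - (1 / L) *\<^sub>R \<Delta>"
  have "norm \<Delta> \<le> L * norm (z - w)" unfolding \<Delta>_def by (rule lipschitz_on_normD[OF lip z w])
  then have "norm (z - v) \<le> norm (z - w)" using L by (simp add: v_def field_simps)
  then have v: "v \<in> U" using ball by (auto simp: dist_norm)
  have t: "f w + G w \<bullet> (v - w) \<le> f v" by (rule tangent[OF Uo U fc w v grad])
  have d: "f v \<le> f z + G z \<bullet> (v - z) + L / 2 * (norm (v - z))^2" by (rule descent[OF U z v grad lip])
  have e1: "G w \<bullet> (v - w) = G w \<bullet> (z - w) - (G w \<bullet> \<Delta>) / L"
    by (simp add: v_def inner_diff_right)
  have e2: "G z \<bullet> (v - z) = - (G z \<bullet> \<Delta>) / L"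
    by (simp add: v_def inner_diff_right)
  have "norm (v - z) = norm \<Delta> / L" using L by (simp add: v_def)
  then have e3: "(norm (v - z))^2 = (\<Delta> \<bullet> \<Delta>) / L^2"
    by (simp add: power_divide power2_norm_eq_inner)
  have e4: "\<Delta> \<bullet> \<Delta> = G z \<bullet> \<Delta> - G w \<bullet> \<Delta>"
    by (simp add: \<Delta>_def inner_diff_left)
  have e5: "(norm \<Delta>)^2 = \<Delta> \<bullet> \<Delta>" by (simp add: power2_norm_eq_inner)
  from t d have "f w + G w \<bullet> (z - w) - (G w \<bullet> \<Delta>) / L \<le> f z - (G z \<bullet> \<Delta>) / L + L / 2 * ((\<Delta> \<bullet> \<Delta>) / L^2)"
    by (simp add: e1 e2 e3)
  moreover have "L / 2 * ((\<Delta> \<bullet> \<Delta>) / L^2) = (\<Delta> \<bullet> \<Delta>) / (2 * L)"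
    using L by (simp add: power2_eq_square field_simps)
  moreover have "(G z \<bullet> \<Delta>) / L - (G w \<bullet> \<Delta>) / L = (\<Delta> \<bullet> \<Delta>) / L"
    by (simp add: e4 diff_divide_distrib)
  moreover have "(\<Delta> \<bullet> \<Delta>) / L - (\<Delta> \<bullet> \<Delta>) / (2 * L) = (\<Delta> \<bullet> \<Delta>) / (2 * L)"
    using L by (simp add: field_simps)
  ultimately show ?thesis unfolding \<Delta>_def[symmetric] e5 by linarith
qed

lemma local_coco:
  fixes f :: "'a::real_inner \<Rightarrow> real"
  assumes Uo: "open U" and U: "convex U" and fc: "convex_on U f" and z: "z \<in> U" and w: "w \<in> U"
    and grad: "\<And>y. y \<in> U \<Longrightarrow> (f has_derivative (\<lambda>h. G y \<bullet> h)) (at y)"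
    and lip: "lipschitz_on L U G" and L: "L > 0"
    and bz: "cball z (norm (z - w)) \<subseteq> U" and bw: "cball w (norm (z - w)) \<subseteq> U"
  shows "(norm (G z - G w))^2 / L \<le> (G z - G w) \<bullet> (z - w)"
proof -
  have 1: "f w + G w \<bullet> (z - w) + (norm (G z - G w))^2 / (2 * L) \<le> f z"
    by (rule half_coco[OF Uo U fc z w grad lip L bz])
  have 2: "f z + G z \<bullet> (w - z) + (norm (G w - G z))^2 / (2 * L) \<le> f w"
  proof (rule half_coco[OF Uo U fc w z grad lip L])
    have "norm (w - z) = norm (z - w)" by (rule norm_minus_commute)
    then show "cball w (norm (w - z)) \<subseteq> U" using bw by simp
  qed
  have "norm (G w - G z) = norm (G z - G w)" by (rule norm_minus_commute)
  with 1 2 show ?thesis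
    by (simp add: inner_diff_left inner_diff_right field_simps)
qed

lemma coco:
  fixes f :: "'a::real_inner \<Rightarrow> real"
  assumes Uo: "open U" and U: "convex U" and fc: "convex_on U f" and x: "x \<in> U" and p: "p \<in> U"
    and grad: "\<And>y. y \<in> U \<Longrightarrow> (f has_derivative (\<lambda>h. G y \<bullet> h)) (at y)"
    and lip: "lipschitz_on L U G" and L: "L > 0"
  shows "(norm (G x - G p))^2 / L \<le> (G x - G p) \<bullet> (x - p)"
proof -
  have "closed_segment p x \<subseteq> U" by (rule closed_segment_subset[OF p x U])
  then obtain r where r: "r > 0" "(\<Union>y\<in>closed_segment p x. cball y r) \<subseteq> U"
    using compact_subset_open_imp_cball_epsilon_subset[OF compact_segment Uo] by metis
  obtain N :: nat where N: "norm (x - p) / r < real N" using reals_Archimedean2 by blast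
  have N0: "N > 0" using N r by (cases "N = 0") (auto simp: divide_less_0_iff) 
  then have Npos: "real N > 0" by simp
  have step: "norm (x - p) / real N \<le> r"
    using N r Npos by (simp add: field_simps)
  define z where "z j = p + (real j / real N) *\<^sub>R (x - p)" for j :: nat
  define \<Delta> where "\<Delta> j = G (z (Suc j)) - G (z j)" for j
  have zS: "z j \<in> closed_segment p x" if "j \<le> N" for j
  proof -
    have "z j = (1 - real j / real N) *\<^sub>R p + (real j / real N) *\<^sub>R x"
      by (simp add: z_def algebra_simps)
    moreover have "0 \<le> real j / real N" "real j / real N \<le> 1" using that Npos by auto
    ultimately show ?thesis unfolding in_segment by blast
  qed
  have zball: "cball (z j) r \<subseteq> U" if "j \<le> N" for j using zS[OF that] r by blast
  have zdiff: "z (Suc j) - z j = (1 / real N) *\<^sub>R (x - p)" for j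
    by (simp add: z_def algebra_simps add_divide_distrib scaleR_add_left)
  have loc: "(norm (\<Delta> j))^2 / L \<le> (\<Delta> j \<bullet> (x - p)) / real N" if "j < N" for j
  proof -
    have nd: "norm (z (Suc j) - z j) \<le> r" using step Npos by (simp add: zdiff)
    have "(norm (\<Delta> j))^2 / L \<le> \<Delta> j \<bullet> (z (Suc j) - z j)"
      unfolding \<Delta>_def
    proof (rule local_coco[OF Uo U fc _ _ grad lip L])
      show "z (Suc j) \<in> U" "z j \<in> U" using zball[of j] zball[of "Suc j"] that r by (auto simp: subset_iff)
      show "cball (z (Suc j)) (norm (z (Suc j) - z j)) \<subseteq> U"
        using zball[of "Suc j"] that nd by (meson Suc_leI subset_cball subset_trans)
      show "cball (z j) (norm (z (Suc j) - z j)) \<subseteq> U"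
        using zball[of j] that nd by (meson less_imp_le subset_cball subset_trans)
    qed
    then show ?thesis by (simp add: zdiff)
  qed
  have tel: "(\<Sum>j<N. \<Delta> j) = G x - G p"
    unfolding \<Delta>_def using N0 by (subst sum_lessThan_telescope) (simp add: z_def)
  have "(norm (G x - G p))^2 \<le> (\<Sum>j<N. norm (\<Delta> j))^2"
    unfolding tel[symmetric] by (intro power_mono norm_sum) auto
  also have "\<dots> \<le> (\<Sum>j<N. (norm (\<Delta> j))^2) * real N"
    using sum_squared_le_sum_of_squares[of "\<lambda>j. norm (\<Delta> j)" "{..<N}"] by simp
  also have "(\<Sum>j<N. (norm (\<Delta> j))^2) = L * (\<Sum>j<N. (norm (\<Delta> j))^2 / L)"
    using L by (simp add: sum_divide_distrib[symmetric])
  also have "(\<Sum>j<N. (norm (\<Delta> j))^2 / L) \<le> (\<Sum>j<N. (\<Delta> j \<bullet> (x - p)) / real N)"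
    by (intro sum_mono loc) simp
  also have "(\<Sum>j<N. (\<Delta> j \<bullet> (x - p)) / real N) = ((G x - G p) \<bullet> (x - p)) / real N"
    by (simp add: sum_divide_distrib[symmetric] inner_sum_left[symmetric] tel)
  finally show ?thesis using L Npos by (simp add: field_simps)
qed

lemma norm_add_sq:
  fixes u w :: "'a::real_inner"
  shows "(norm (u + s *\<^sub>R w))^2 = (norm u)^2 + 2 * s * (u \<bullet> w) + s^2 * (norm w)^2"
  unfolding power2_norm_eq_inner
  by (simp add: inner_add_left inner_add_right inner_commute power2_eq_square algebra_simps)

lemma step_core:
  fixes g gs x y p :: "'a::real_inner"
  assumes X: "convex X" and x: "x \<in> X" and p: "p \<in> X" and y: "y \<in> X" and L: "L > 0"
    and t: "t = norm (g - gs) / L"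
    and cc: "(norm (g - gs))^2 / L \<le> (g - gs) \<bullet> (x - p)"
    and varp: "\<And>z. z \<in> X \<Longrightarrow> 0 \<le> gs \<bullet> (z - p)"
    and yb: "norm (y - x) \<le> t"
    and ymin: "\<And>z. z \<in> X \<Longrightarrow> norm (z - x) \<le> t \<Longrightarrow> g \<bullet> y \<le> g \<bullet> z"
  shows "(norm (y - p))^2 \<le> (norm (x - p))^2 - t^2"
proof -
  define a where "a = (1 / L) *\<^sub>R (g - gs)"
  have na: "norm a = t" using L by (simp add: a_def t)
  have ax: "t^2 \<le> a \<bullet> (x - p)"
  proof -
    have e1: "a \<bullet> (x - p) = ((g - gs) \<bullet> (x - p)) / L" by (simp add: a_def)
    have e2: "t^2 = ((norm (g - gs))^2 / L) / L" by (simp add: t power_divide power2_eq_square)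
    show ?thesis unfolding e1 e2 using divide_right_mono[OF cc, of L] L by simp
  qed
  have feas: "0 \<le> a \<bullet> (p - y)" if s: "0 < s" "s \<le> 1" and nz: "norm (y + s *\<^sub>R (p - y) - x) \<le> t" for s
  proof -
    have "y + s *\<^sub>R (p - y) = (1 - s) *\<^sub>R y + s *\<^sub>R p" by (simp add: algebra_simps)
    then have zX: "y + s *\<^sub>R (p - y) \<in> X" using convexD_alt[OF X y p, of s] s by simp
    have "g \<bullet> y \<le> g \<bullet> (y + s *\<^sub>R (p - y))" by (rule ymin[OF zX nz])
    then have "0 \<le> s * (g \<bullet> (p - y))" by (simp add: inner_add_right)
    then have "0 \<le> g \<bullet> (p - y)" using s by (simp add: zero_le_mult_iff)
    moreover have "0 \<le> gs \<bullet> (y - p)" by (rule varp[OF y])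
    ultimately have "0 \<le> (g - gs) \<bullet> (p - y)"
      by (simp add: inner_diff_left inner_diff_right)
    then show ?thesis using L by (simp add: a_def)
  qed
  show ?thesis
  proof (cases "t = 0")
    case True
    then have "y = x" using yb by simp
    then show ?thesis using True by simp
  next
    case False
    then have tpos: "t > 0" using na by (metis norm_ge_zero order_le_less)
    have nyx: "norm (y - x) = t"
    proof (rule ccontr)
      assume "norm (y - x) \<noteq> t"
      then have lt: "norm (y - x) < t" using yb by simp
      have ap: "0 \<le> a \<bullet> (p - y)"
      proof (cases "p = y")
        case True then show ?thesis by simp
      next
        case False
        then have np: "norm (p - y) > 0" by simp
        define s where "s = min 1 ((t - norm (y - x)) / norm (p - y))"
        have s0: "0 < s" "s \<le> 1" using lt np by (auto simp: s_def)
        have "s * norm (p - y) \<le> t - norm (y - x)"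
          using np lt by (simp add: s_def min_def field_simps)
        moreover have "norm (y + s *\<^sub>R (p - y) - x) \<le> norm (y - x) + s * norm (p - y)"
        proof -
          have "y + s *\<^sub>R (p - y) - x = (y - x) + s *\<^sub>R (p - y)" by simp
          then show ?thesis using norm_triangle_ineq[of "y - x" "s *\<^sub>R (p - y)"] s0 by (simp only:) simp
        qed
        ultimately show ?thesis using feas[OF s0] by simp
      qed
      have "a \<bullet> (x - y) = a \<bullet> (x - p) + a \<bullet> (p - y)" by (simp add: inner_diff_right)
      then have "t^2 \<le> a \<bullet> (x - y)" using ax ap by simp
      moreover have "a \<bullet> (x - y) \<le> norm a * norm (x - y)" by (rule norm_cauchy_schwarz)
      moreover have "norm a * norm (x - y) < t * t"
        using na lt tpos by (simp add: norm_minus_commute)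
      ultimately show False by (simp add: power2_eq_square)
    qed
    define c where "c = (y - x) \<bullet> (p - y)"
    have c0: "0 \<le> c"
    proof (rule ccontr)
      assume "\<not> 0 \<le> c"
      then have cneg: "c < 0" by simp
      then have "p \<noteq> y" by (auto simp: c_def)
      then have np: "(norm (p - y))^2 > 0" by simp
      define s where "s = min 1 (- 2 * c / (norm (p - y))^2)"
      have s0: "0 < s" "s \<le> 1" using cneg np by (auto simp: s_def divide_neg_pos)
      have sn: "s * (norm (p - y))^2 \<le> - 2 * c"
        using np cneg by (simp add: s_def min_def field_simps)
      have "(norm (y + s *\<^sub>R (p - y) - x))^2 = (norm (y - x))^2 + 2 * s * c + s^2 * (norm (p - y))^2"
      proof -
        have "y + s *\<^sub>R (p - y) - x = (y - x) + s *\<^sub>R (p - y)" by simp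
        then show ?thesis unfolding c_def by (simp only: norm_add_sq)
      qed
      also have "\<dots> \<le> t^2"
      proof -
        have "s^2 * (norm (p - y))^2 = s * (s * (norm (p - y))^2)" by (simp add: power2_eq_square)
        also have "\<dots> \<le> s * (- 2 * c)" using sn s0 by (intro mult_left_mono) auto
        finally show ?thesis using nyx by simp
      qed
      finally have "norm (y + s *\<^sub>R (p - y) - x) \<le> t"
        using tpos by (simp add: power2_le_iff_abs_le abs_le_iff) 
      then have ap: "0 \<le> a \<bullet> (p - y)" by (rule feas[OF s0])
      have axy: "a \<bullet> (x - y) = a \<bullet> (x - p) + a \<bullet> (p - y)" by (simp add: inner_diff_right)
      then have "t^2 \<le> a \<bullet> (x - y)" using ax ap by simp
      have "(norm ((x - y) - a))^2 = (norm (x - y))^2 - 2 * (a \<bullet> (x - y)) + (norm a)^2"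
        by (simp add: power2_norm_eq_inner inner_diff_left inner_diff_right inner_commute)
      also have "\<dots> \<le> 0" using \<open>t^2 \<le> a \<bullet> (x - y)\<close> nyx na by (simp add: norm_minus_commute)
      finally have "x - y = a" by simp
      moreover have "a \<bullet> a = t^2" using na by (simp flip: power2_norm_eq_inner)
      ultimately have "a \<bullet> (p - y) \<le> 0" using axy ax by simp
      then have "a \<bullet> (p - y) = 0" using ap by simp
      moreover have "c = - (a \<bullet> (p - y))"
        using \<open>x - y = a\<close> by (simp add: c_def flip: \<open>x - y = a\<close>) (simp add: inner_diff_left)
      ultimately show False using cneg by simp
    qed
    have "(norm (y - p))^2 = (norm (x - p))^2 - (norm (y - x))^2 - 2 * c"
    proof -
      have "y - p = (x - p) + 1 *\<^sub>R (y - x)" by simp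
      then have "(norm (y - p))^2 = (norm (x - p))^2 + 2 * 1 * ((x - p) \<bullet> (y - x)) + 1^2 * (norm (y - x))^2"
        by (simp only: norm_add_sq)
      moreover have "(x - p) \<bullet> (y - x) = -((norm (y - x))^2) - c"
      proof -
        have "x - p = - (y - x) - (p - y)" by simp
        then have "(x - p) \<bullet> (y - x) = - ((y - x) \<bullet> (y - x)) - (p - y) \<bullet> (y - x)"
          by (simp add: inner_diff_left)
        then show ?thesis by (simp add: c_def inner_commute power2_norm_eq_inner)
      qed
      ultimately show ?thesis by simp
    qed
    then show ?thesis using c0 nyx by simp
  qed
qed

lemma first_order:
  fixes f :: "'a::real_inner \<Rightarrow> real"
  assumes X: "convex X" and XU: "X \<subseteq> U" and p: "p \<in> X" and z: "z \<in> X"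
    and grad: "\<And>y. y \<in> U \<Longrightarrow> (f has_derivative (\<lambda>h. G y \<bullet> h)) (at y)"
    and pmin: "\<And>y. y \<in> X \<Longrightarrow> f p \<le> f y"
  shows "0 \<le> G p \<bullet> (z - p)"
proof (rule ccontr)
  assume "\<not> 0 \<le> G p \<bullet> (z - p)"
  then have neg: "G p \<bullet> (z - p) < 0" by simp
  have D: "((\<lambda>s. f (p + s *\<^sub>R (z - p))) has_real_derivative (G (p + 0 *\<^sub>R (z - p)) \<bullet> (z - p))) (at 0)"
    by (rule deriv_line) (use grad p XU in auto)
  obtain d where d: "d > 0" "\<And>h. h > 0 \<Longrightarrow> h < d \<Longrightarrow> f (p + 0 *\<^sub>R (z - p)) > f (p + (0 + h) *\<^sub>R (z - p))"
    using DERIV_neg_dec_right[OF D] neg by auto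
  define h where "h = min (d / 2) 1"
  have h: "0 < h" "h < d" "h \<le> 1" using d by (auto simp: h_def)
  have "p + h *\<^sub>R (z - p) = (1 - h) *\<^sub>R p + h *\<^sub>R z" by (simp add: algebra_simps)
  then have "p + h *\<^sub>R (z - p) \<in> X" using convexD_alt[OF X p z, of h] h by simp
  then have "f p \<le> f (p + h *\<^sub>R (z - p))" by (rule pmin)
  moreover have "f p > f (p + h *\<^sub>R (z - p))" using d(2)[OF h(1) h(2)] by simp
  ultimately show False by simp
qed

lemma one_step:
  fixes f :: "'a::real_inner \<Rightarrow> real"
  assumes Uo: "open U" and U: "convex U" and X: "convex X" and XU: "X \<subseteq> U"
    and fc: "convex_on U f"
    and grad: "\<And>y. y \<in> U \<Longrightarrow> (f has_derivative (\<lambda>h. G y \<bullet> h)) (at y)"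
    and lip: "lipschitz_on L U G" and LM: "L \<le> M"
    and pmin: "p \<in> X \<and> (\<forall>y\<in>X. f p \<le> f y)"
    and x: "x \<in> X"
    and t: "t = (if G x \<noteq> G p then norm (G x - G p) / L else 0)"
    and yin: "y \<in> X \<inter> cball x t"
    and ymin: "\<forall>z\<in>X \<inter> cball x t. G x \<bullet> y \<le> G x \<bullet> z"
  shows "(norm (G x - G p))^2 \<le> M^2 * (2 * ((norm (x - q))^2 - (norm (y - q))^2) + 4 * (norm (p - q))^2)"
proof (cases "G x = G p")
  case True
  then have "t = 0" using t by simp
  then have "y = x" using yin by simp
  then show ?thesis using True by simp
next
  case False
  have L0: "0 \<le> L" using lip by (rule lipschitz_on_nonneg)
  have p: "p \<in> X" using pmin by simp
  have "L \<noteq> 0"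
  proof
    assume "L = 0"
    then have "norm (G x - G p) \<le> 0" using lipschitz_on_normD[OF lip, of x p] x p XU by auto
    then show False using False by simp
  qed
  then have L: "L > 0" using L0 by simp
  have t': "t = norm (G x - G p) / L" using t False by simp
  have y: "y \<in> X" and yb: "norm (y - x) \<le> t" using yin by (auto simp: dist_norm norm_minus_commute)
  have cc: "(norm (G x - G p))^2 / L \<le> (G x - G p) \<bullet> (x - p)"
    by (rule coco[OF Uo U fc _ _ grad lip L]) (use x p XU in auto)
  have varp: "0 \<le> G p \<bullet> (z - p)" if "z \<in> X" for z
    by (rule first_order[OF X XU p that grad]) (use pmin in auto)
  have core: "(norm (y - p))^2 \<le> (norm (x - p))^2 - t^2"
    by (rule step_core[OF X x p y L t' cc varp yb])
       (use ymin in \<open>auto simp: dist_norm norm_minus_commute\<close>)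
  have e1: "(norm (y - q))^2 = (norm (y - p))^2 + 2 * 1 * ((y - p) \<bullet> (p - q)) + 1^2 * (norm (p - q))^2"
    using norm_add_sq[of "y - p" 1 "p - q"] by simp
  have e2: "(norm (x - q))^2 = (norm (x - p))^2 + 2 * 1 * ((x - p) \<bullet> (p - q)) + 1^2 * (norm (p - q))^2"
    using norm_add_sq[of "x - p" 1 "p - q"] by simp
  have e3: "(y - p) \<bullet> (p - q) - (x - p) \<bullet> (p - q) = (y - x) \<bullet> (p - q)"
    by (simp add: inner_diff_left)
  have "(y - x) \<bullet> (p - q) \<le> norm (y - x) * norm (p - q)" by (rule norm_cauchy_schwarz)
  also have "\<dots> \<le> t * norm (p - q)" using yb by (intro mult_right_mono) auto
  also have "\<dots> \<le> t^2 / 4 + (norm (p - q))^2"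
    using sum_squares_bound[of "t / 2" "norm (p - q)"]
    by (simp add: power2_eq_square field_simps)
  finally have cs: "(y - x) \<bullet> (p - q) \<le> t^2 / 4 + (norm (p - q))^2" .
  have tb: "t^2 \<le> 2 * ((norm (x - q))^2 - (norm (y - q))^2) + 4 * (norm (p - q))^2"
    using core e1 e2 e3 cs by simp
  have "(norm (G x - G p))^2 = L^2 * t^2" using L by (simp add: t' power_divide)
  also have "\<dots> \<le> M^2 * t^2" using L LM by (intro mult_right_mono power_mono) auto
  also have "\<dots> \<le> M^2 * (2 * ((norm (x - q))^2 - (norm (y - q))^2) + 4 * (norm (p - q))^2)"
    using tb by (intro mult_left_mono) auto
  finally show ?thesis .
qed

lemma idx_seqs_Suc:
  "idx_seqs n (Suc k) = (\<lambda>(is, i). is @ [i]) ` (idx_seqs n k \<times> {..<n})"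
proof (rule set_eqI, rule iffI)
  fix js assume js: "js \<in> idx_seqs n (Suc k)"
  then have "js \<noteq> []" by (auto simp: idx_seqs_def)
  then obtain ks i where e: "js = ks @ [i]" by (metis rev_exhaust)
  with js have "ks \<in> idx_seqs n k" "i < n" by (auto simp: idx_seqs_def)
  then show "js \<in> (\<lambda>(is, i). is @ [i]) ` (idx_seqs n k \<times> {..<n})" using e by force
qed (auto simp: idx_seqs_def)

lemma idx_seqs_finite: "finite (idx_seqs n k)"
proof -
  have "idx_seqs n k = {xs. set xs \<subseteq> {..<n} \<and> length xs = k}" by (auto simp: idx_seqs_def)
  then show ?thesis using finite_lists_length_eq[of "{..<n}" k] by simp
qed

lemma idx_seqs_card: "card (idx_seqs n k) = n ^ k"
proof -
  have "idx_seqs n k = {xs. set xs \<subseteq> {..<n} \<and> length xs = k}" by (auto simp: idx_seqs_def)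
  then show ?thesis using card_lists_length_eq[of "{..<n}" k] by simp
qed

lemma sum_idx_Suc:
  "(\<Sum>js\<in>idx_seqs n (Suc k). h js) = (\<Sum>is\<in>idx_seqs n k. \<Sum>i<n. h (is @ [i]))"
proof -
  have inj: "inj_on (\<lambda>(is, i). is @ [i]) (idx_seqs n k \<times> {..<n})"
    by (auto simp: inj_on_def)
  have "(\<Sum>js\<in>idx_seqs n (Suc k). h js) = (\<Sum>(is, i)\<in>idx_seqs n k \<times> {..<n}. h (is @ [i]))"
    unfolding idx_seqs_Suc by (subst sum.reindex[OF inj]) (simp add: case_prod_unfold)
  also have "\<dots> = (\<Sum>is\<in>idx_seqs n k. \<Sum>i<n. h (is @ [i]))"
    by (rule sum.cartesian_product[symmetric])
  finally show ?thesis .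
qed

lemma ue_Suc:
  assumes "n \<ge> 1"
  shows "unif_expect n (Suc k) h = unif_expect n k (\<lambda>is. (\<Sum>i<n. h (is @ [i])) / real n)"
  using assms unfolding unif_expect_def sum_idx_Suc
  by (simp add: sum_divide_distrib[symmetric] field_simps)

lemma ue_const:
  assumes "n \<ge> 1"
  shows "unif_expect n k (\<lambda>_. c) = c"
  using assms unfolding unif_expect_def by (simp add: idx_seqs_card)

lemma ue_mono:
  assumes "\<And>is. is \<in> idx_seqs n k \<Longrightarrow> h1 is \<le> h2 is"
  shows "unif_expect n k h1 \<le> unif_expect n k h2"
  unfolding unif_expect_def using assms by (intro divide_right_mono sum_mono) auto

lemma ue_lin:
  "unif_expect n k (\<lambda>is. a * h1 is + b * h2 is + c * h3 is) =
     a * unif_expect n k h1 + b * unif_expect n k h2 + c * unif_expect n k h3"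
  unfolding unif_expect_def
  by (simp add: sum.distrib sum_distrib_left[symmetric] add_divide_distrib)

lemma ue_nonneg:
  assumes "\<And>is. is \<in> idx_seqs n k \<Longrightarrow> 0 \<le> h is"
  shows "0 \<le> unif_expect n k h"
  unfolding unif_expect_def using assms by (intro divide_nonneg_nonneg sum_nonneg) auto

lemma ue_zero: "unif_expect n 0 h = h []"
proof -
  have "idx_seqs n 0 = {[]}" by (auto simp: idx_seqs_def)
  then show ?thesis by (simp add: unif_expect_def)
qed

lemma ue_jensen:
  assumes "n \<ge> 1"
  shows "(unif_expect n k h)^2 \<le> unif_expect n k (\<lambda>is. (h is)^2)"
proof -
  have c: "real (card (idx_seqs n k)) = real n ^ k" by (simp add: idx_seqs_card)
  have pos: "real n ^ k > 0" using assms by simp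
  have "(\<Sum>is\<in>idx_seqs n k. h is)^2 \<le> (\<Sum>is\<in>idx_seqs n k. (h is)^2) * real n ^ k"
    using sum_squared_le_sum_of_squares[of h "idx_seqs n k"] c by simp
  then have "(\<Sum>is\<in>idx_seqs n k. h is)^2 / (real n ^ k)^2 \<le> (\<Sum>is\<in>idx_seqs n k. (h is)^2) * real n ^ k / (real n ^ k)^2"
    by (intro divide_right_mono) auto
  moreover have "n \<noteq> 0" using assms by simp
  ultimately show ?thesis using pos unfolding unif_expect_def
    by (simp add: power_divide power2_eq_square)
qed



theorem theorem14:
  fixes X U :: "'a::euclidean_space set"
    and n :: nat
    and f :: "nat \<Rightarrow> 'a \<Rightarrow> real"
    and G :: "nat \<Rightarrow> 'a \<Rightarrow> 'a"
    and L :: "nat \<Rightarrow> real"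
    and xstar x0 :: 'a
    and xs :: "nat \<Rightarrow> 'a"
    and x :: "nat list \<Rightarrow> 'a"
    and K :: nat
  assumes n_pos: "n \<ge> 1"
    and X_ne: "X \<noteq> {}" and X_closed: "closed X" and X_convex: "convex X"
    and U_open: "open U" and U_convex: "convex U" and XU: "X \<subseteq> U"
    and f_convex: "\<And>i. i < n \<Longrightarrow> convex_on U (f i)"
    and f_grad: "\<And>i y. i < n \<Longrightarrow> y \<in> U \<Longrightarrow>
                   (f i has_derivative (\<lambda>h. G i y \<bullet> h)) (at y)"
    and f_smooth: "\<And>i. i < n \<Longrightarrow> lipschitz_on (L i) U (G i)"
    and xstar_min: "xstar \<in> X \<and> (\<forall>y\<in>X. (\<Sum>i<n. f i xstar) / real n \<le> (\<Sum>i<n. f i y) / real n)"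
    and xs_min: "\<And>i. i < n \<Longrightarrow> xs i \<in> X \<and> (\<forall>y\<in>X. f i (xs i) \<le> f i y)"
    and x0_in: "x0 \<in> X"
    and x_init: "x [] = x0"
    and x_step: "\<And>is i. is \<in> idx_seqs n (length is) \<Longrightarrow> i < n \<Longrightarrow>
       (let t = (if G i (x is) \<noteq> G i (xs i)
                 then norm (G i (x is) - G i (xs i)) / L i else 0)
        in x (is @ [i]) \<in> X \<inter> cball (x is) t \<and>
           (\<forall>z\<in>X \<inter> cball (x is) t. G i (x is) \<bullet> x (is @ [i]) \<le> G i (x is) \<bullet> z))"
    and K_pos: "K \<ge> 1"
  shows "(MIN k\<in>{..<K}. unif_expect n k
            (\<lambda>is. norm ((1 / real n) *\<^sub>R (\<Sum>i<n. G i (x is)) - (1 / real n) *\<^sub>R (\<Sum>i<n. G i xstar))))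
         \<le> sqrt (4 * (MAX i\<in>{..<n}. L i)^2 * (norm (x0 - xstar))^2 / real K
                 + (8 * (MAX i\<in>{..<n}. L i)^2 + 2 * ((\<Sum>i<n. (L i)^2) / real n))
                   * (MAX i\<in>{..<n}. norm (xs i - xstar))^2)"
proof -
  let ?q = xstar
  define Lm where "Lm = (MAX i\<in>{..<n}. L i)"
  define Dm where "Dm = (MAX i\<in>{..<n}. norm (xs i - xstar))"
  define L2 where "L2 = (\<Sum>i<n. (L i)^2) / real n"
  define C where "C = (8 * Lm^2 + 2 * L2) * Dm^2"
  define V where "V = (\<lambda>is. norm ((1 / real n) *\<^sub>R (\<Sum>i<n. G i (x is)) - (1 / real n) *\<^sub>R (\<Sum>i<n. G i xstar)))"
  define e where "e = (\<lambda>is. (norm (x is - xstar))^2)"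
  define A where "A k = unif_expect n k e" for k
  define R where "R = 4 * Lm^2 * (norm (x0 - xstar))^2 / real K + C"
  have npos: "real n > 0" using n_pos by simp
  have ne: "{..<n} \<noteq> {}" using n_pos by (auto simp: lessThan_empty_iff)
  have Lle: "L i \<le> Lm" if "i < n" for i unfolding Lm_def using that by (intro Max_ge) auto
  have L0: "0 \<le> L i" if "i < n" for i using f_smooth[OF that] by (rule lipschitz_on_nonneg)
  have Dle: "norm (xs i - xstar) \<le> Dm" if "i < n" for i unfolding Dm_def using that by (intro Max_ge) auto
  have xX: "x js \<in> X" if "js \<in> idx_seqs n (length js)" for js
    using that
  proof (induction js rule: rev_induct)
    case Nil then show ?case using x_init x0_in by simp
  next
    case (snoc i ks)
    then have ks: "ks \<in> idx_seqs n (length ks)" and i: "i < n" by (auto simp: idx_seqs_def)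
    show ?case using x_step[OF ks i] by (simp add: Let_def)
  qed
  have P: "(V js)^2 \<le> 4 * Lm^2 * (e js - (\<Sum>i<n. e (js @ [i])) / real n) + C"
    if js: "js \<in> idx_seqs n k" for js k
  proof -
    have js': "js \<in> idx_seqs n (length js)" using js by (simp add: idx_seqs_def)
    define a where "a i = norm (G i (x js) - G i xstar)" for i
    have ai: "(a i)^2 \<le> 4 * Lm^2 * (e js - e (js @ [i])) + 8 * Lm^2 * Dm^2 + 2 * (L i)^2 * Dm^2"
      if i: "i < n" for i
    proof -
      have pmin: "xs i \<in> X \<and> (\<forall>y\<in>X. f i (xs i) \<le> f i y)" by (rule xs_min[OF i])
      define t where "t = (if G i (x js) \<noteq> G i (xs i) then norm (G i (x js) - G i (xs i)) / L i else 0)"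
      have st: "x (js @ [i]) \<in> X \<inter> cball (x js) t \<and>
           (\<forall>z\<in>X \<inter> cball (x js) t. G i (x js) \<bullet> x (js @ [i]) \<le> G i (x js) \<bullet> z)"
        using x_step[OF js' i] unfolding t_def Let_def by simp
      have u: "(norm (G i (x js) - G i (xs i)))^2 \<le> Lm^2 * (2 * ((norm (x js - xstar))^2 - (norm (x (js @ [i]) - xstar))^2) + 4 * (norm (xs i - xstar))^2)"
        by (rule one_step[OF U_open U_convex X_convex XU f_convex[OF i] f_grad[OF i] f_smooth[OF i] Lle[OF i] pmin xX[OF js'] t_def])
           (use st in auto)
      have "(norm (xs i - xstar))^2 \<le> Dm^2" using Dle[OF i] by (intro power_mono) auto
      then have u': "(norm (G i (x js) - G i (xs i)))^2 \<le> Lm^2 * (2 * (e js - e (js @ [i])) + 4 * Dm^2)"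
        using u unfolding e_def by (smt (verit) mult_left_mono zero_le_power2)
      have "norm (G i (xs i) - G i xstar) \<le> L i * norm (xs i - xstar)"
        using lipschitz_on_normD[OF f_smooth[OF i], of "xs i" xstar] pmin xstar_min XU by auto
      also have "\<dots> \<le> L i * Dm" using Dle[OF i] L0[OF i] by (intro mult_left_mono) auto
      finally have v: "(norm (G i (xs i) - G i xstar))^2 \<le> (L i)^2 * Dm^2"
        by (metis norm_ge_zero power_mono power_mult_distrib)
      have "a i \<le> norm (G i (x js) - G i (xs i)) + norm (G i (xs i) - G i xstar)"
        unfolding a_def using norm_triangle_ineq[of "G i (x js) - G i (xs i)" "G i (xs i) - G i xstar"] by simp
      then have "(a i)^2 \<le> (norm (G i (x js) - G i (xs i)) + norm (G i (xs i) - G i xstar))^2"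
        by (intro power_mono) (auto simp: a_def)
      also have "\<dots> \<le> 2 * (norm (G i (x js) - G i (xs i)))^2 + 2 * (norm (G i (xs i) - G i xstar))^2"
        by (smt (verit) sum_squares_bound power2_sum)
      finally show ?thesis using u' v by (simp add: algebra_simps)
    qed
    have "V js = norm ((1 / real n) *\<^sub>R (\<Sum>i<n. G i (x js) - G i xstar))"
      by (simp add: V_def sum_subtractf scaleR_diff_right)
    also have "\<dots> = norm (\<Sum>i<n. G i (x js) - G i xstar) / real n"
      using npos by simp
    also have "\<dots> \<le> (\<Sum>i<n. a i) / real n"
      using npos unfolding a_def by (intro divide_right_mono norm_sum) auto
    finally have "V js \<le> (\<Sum>i<n. a i) / real n" .
    then have "(V js)^2 \<le> ((\<Sum>i<n. a i) / real n)^2"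
      by (intro power_mono) (auto simp: V_def)
    also have "\<dots> = (\<Sum>i<n. a i)^2 / (real n)^2" by (simp add: power_divide)
    also have "\<dots> \<le> ((\<Sum>i<n. (a i)^2) * real n) / (real n)^2"
      using sum_squared_le_sum_of_squares[of a "{..<n}"] by (intro divide_right_mono) auto
    also have "\<dots> = (\<Sum>i<n. (a i)^2) / real n" using npos by (simp add: power2_eq_square)
    also have "\<dots> \<le> (\<Sum>i<n. 4 * Lm^2 * (e js - e (js @ [i])) + 8 * Lm^2 * Dm^2 + 2 * (L i)^2 * Dm^2) / real n"
      using npos by (intro divide_right_mono sum_mono ai) auto
    also have "\<dots> = 4 * Lm^2 * (e js - (\<Sum>i<n. e (js @ [i])) / real n) + C"
      using npos unfolding C_def L2_def
      by (simp add: sum.distrib sum_subtractf sum_distrib_left[symmetric] sum_distrib_right[symmetric]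
          field_simps)
    finally show ?thesis .
  qed
  have Ek: "unif_expect n k (\<lambda>js. (V js)^2) \<le> 4 * Lm^2 * (A k - A (Suc k)) + C" for k
  proof -
    have "unif_expect n k (\<lambda>js. (V js)^2) \<le>
          unif_expect n k (\<lambda>js. (4 * Lm^2) * e js + (- 4 * Lm^2) * ((\<Sum>i<n. e (js @ [i])) / real n) + C * 1)"
      by (rule ue_mono) (use P in \<open>simp add: algebra_simps\<close>)
    also have "\<dots> = 4 * Lm^2 * A k + (- 4 * Lm^2) * A (Suc k) + C"
      unfolding ue_lin A_def ue_Suc[OF n_pos] ue_const[OF n_pos] by simp
    finally show ?thesis by (simp add: algebra_simps)
  qed
  have "(\<Sum>k<K. unif_expect n k (\<lambda>js. (V js)^2)) \<le> (\<Sum>k<K. 4 * Lm^2 * (A k - A (Suc k)) + C)"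
    by (intro sum_mono Ek)
  also have "\<dots> = 4 * Lm^2 * (A 0 - A K) + real K * C"
    by (simp add: sum.distrib sum_distrib_left[symmetric] sum_lessThan_telescope')
  also have "\<dots> \<le> 4 * Lm^2 * A 0 + real K * C"
  proof -
    have "0 \<le> A K" unfolding A_def e_def by (rule ue_nonneg) simp
    then show ?thesis by (simp add: algebra_simps)
  qed
  also have "\<dots> = real K * R"
    using K_pos unfolding R_def A_def ue_zero e_def x_init by (simp add: field_simps)
  finally have sumR: "(\<Sum>k<K. unif_expect n k (\<lambda>js. (V js)^2)) \<le> real K * R" .
  obtain k where k: "k < K" "unif_expect n k (\<lambda>js. (V js)^2) \<le> R"
  proof (rule ccontr)
    assume "\<not> thesis"
    then have all: "\<And>k. k < K \<Longrightarrow> R < unif_expect n k (\<lambda>js. (V js)^2)" using that by force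
    have "(\<Sum>k<K. R) < (\<Sum>k<K. unif_expect n k (\<lambda>js. (V js)^2))"
      using K_pos by (intro sum_strict_mono all) (auto simp: lessThan_empty_iff)
    then show False using sumR by simp
  qed
  have "unif_expect n k V \<le> sqrt (unif_expect n k (\<lambda>js. (V js)^2))"
    using ue_jensen[OF n_pos, of k V] by (simp add: real_le_rsqrt)
  also have "\<dots> \<le> sqrt R" using k(2) by simp
  finally have kb: "unif_expect n k V \<le> sqrt R" .
  have "(MIN k\<in>{..<K}. unif_expect n k V) \<le> unif_expect n k V"
    using k(1) by (intro Min_le) auto
  with kb have "(MIN k\<in>{..<K}. unif_expect n k V) \<le> sqrt R" by simp
  then show ?thesis unfolding V_def R_def C_def L2_def Lm_def Dm_def by simp
qed

end
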